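(* Fix an integer $n\ge1$. Let $Q$ be the variety obtained by gluing $Q_0=\mathbb A^1\times\mathbb A^2$ and $Q_1=\mathbb A^1\times\mathbb A^2$ (coordinates $(t,(u,v))$ on each) along the open sets $\{t\ne0\}$ via $Q_0\supset\{t\neq 0\}\to\{t\ne0\}\subset Q_1$, $(t,(u,v))\mapsto(t^{-1},(t^{n+1}v^n+t^{n+2}u,\,tv))$. Define regular functions on $Q$ (given on $Q_0$; on $Q_1$) by: $f_0=tv$; $v$. $f_1=v$; $tv$. $g_i=t^{n+2-i}u+t^{n+1-i}v^n$; $t^iu$ ($i=0,\dots,n+1$). $h=u$; $t^{n+2}u-t^{n+1}v^n$. Let $\hat P\subset\mathbb A^{n+5}$ be the reduced affine variety defined by the ideal $I\subset\mathbb{C}[X_0,X_1,Y_0,\dots,Y_{n+1},Z]$ generated by $Y_iY_j-Y_kY_l$ ($i+j=k+l$), $X_0Y_{i+1}-X_1Y_i$ ($i=0,\dots,n$), $ZY_i+X_1^nY_{i+1}-Y_{i+1}Y_{n+1}$ ($i=0,\dots,n$), and $ZX_0+X_1^{n+1}-X_1Y_{n+1}$, and let $\psi=(f_0,f_1,g_0,\dots,g_{n+1},h)\colon Q\to\hat P$. Then $\psi$ contracts the curve $C=\{u=v=0\}\simeq\mathbb P^1$ to $0$ and restricts to an isomorphism $Q\setminus C\to\hat P\setminus\{0\}$; moreover $\mathcal O(Q)=\mathbb C[f_0,f_1,g_0,\dots,g_{n+1},h]$ and $\psi^*\colon\mathcal O(\hat P)\to\mathcal O(Q)$ is an isomorp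hism.
   Context: All varieties are over $\mathbb{C}$. (In the paper, $\hat P$ is the affine extension $\hat P_n$ of $\mathrm{SL}_2$.) *)

theory Defs
  imports Complex_Main
begin

text \<open>Points of affine m-space are represented as functions nat => complex; the
coordinates are the values at 0,...,m-1.  Polynomial functions in m variables are
the smallest set containing constants and the coordinate functions and closed
under sum and product (over the infinite field C these are exactly the
polynomials C[x_0,...,x_{m-1}]).\<close>

inductive_set polyfuns :: "nat \<Rightarrow> ((nat \<Rightarrow> complex) \<Rightarrow> complex) set" for m :: nat where
  const: "(\<lambda>x. c) \<in> polyfuns m"
| var: "i < m \<Longrightarrow> (\<lambda>x. x i) \<in> polyfuns m"
| add: "p \<in> polyfuns m \<Longrightarrow> q \<in> polyfuns m \<Longrightarrow> (\<lambda>x. p x + q x) \<in> polyfuns m"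
| mult: "p \<in> polyfuns m \<Longrightarrow> q \<in> polyfuns m \<Longrightarrow> (\<lambda>x. p x * q x) \<in> polyfuns m"

type_synonym pt3 = "complex \<times> complex \<times> complex"

text \<open>Chart index: False = Q_0, True = Q_1.  Transition map on t /= 0.\<close>
definition glue :: "nat \<Rightarrow> pt3 \<Rightarrow> pt3" where
  "glue n p = (case p of (t, u, v) \<Rightarrow>
     (inverse t, t ^ (n + 1) * v ^ n + t ^ (n + 2) * u, t * v))"

definition Qrel :: "nat \<Rightarrow> ((bool \<times> pt3) \<times> (bool \<times> pt3)) set" where
  "Qrel n = {(a, b). a = b
     \<or> (fst a = False \<and> fst b = True \<and> fst (snd a) \<noteq> 0 \<and> snd b = glue n (snd a))
     \<or> (fst a = True \<and> fst b = False \<and> fst (snd b) \<noteq> 0 \<and> snd a = glue n (snd b))}"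

definition Qpts :: "nat \<Rightarrow> (bool \<times> pt3) set set" where
  "Qpts n = UNIV // Qrel n"

definition chart :: "nat \<Rightarrow> bool \<Rightarrow> pt3 \<Rightarrow> (bool \<times> pt3) set" where
  "chart n i p = Qrel n `` {(i, p)}"

definition regQ :: "nat \<Rightarrow> ((bool \<times> pt3) set \<Rightarrow> complex) \<Rightarrow> bool" where
  "regQ n F = (\<forall>i. (\<lambda>x. F (chart n i (x 0, x 1, x 2))) \<in> polyfuns 3)"

definition Ccurve :: "nat \<Rightarrow> (bool \<times> pt3) set set" where
  "Ccurve n = {chart n i (t, 0, 0) | i t. True}"

text \<open>Coordinates of A^(n+5): X_0 = 0, X_1 = 1, Y_i = 2+i (i = 0..n+1), Z = n+4.\<close>
definition psi_rep :: "nat \<Rightarrow> bool \<Rightarrow> pt3 \<Rightarrow> (nat \<Rightarrow> complex)" where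
  "psi_rep n i p = (case p of (t, u, v) \<Rightarrow> (\<lambda>k.
     if \<not> i then
       (if k = 0 then t * v else if k = 1 then v
        else if k \<le> n + 3 then t ^ (n + 2 - (k - 2)) * u + t ^ (n + 1 - (k - 2)) * v ^ n
        else if k = n + 4 then u else 0)
     else
       (if k = 0 then v else if k = 1 then t * v
        else if k \<le> n + 3 then t ^ (k - 2) * u
        else if k = n + 4 then t ^ (n + 2) * u - t ^ (n + 1) * v ^ n else 0)))"

definition psi :: "nat \<Rightarrow> (bool \<times> pt3) set \<Rightarrow> (nat \<Rightarrow> complex)" where
  "psi n x = (case (SOME r. r \<in> x) of (i, p) \<Rightarrow> psi_rep n i p)"

definition Phat :: "nat \<Rightarrow> (nat \<Rightarrow> complex) set" where
  "Phat n = {x. (\<forall>k\<ge>n + 5. x k = 0)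
     \<and> (\<forall>i j k l. i \<le> n + 1 \<and> j \<le> n + 1 \<and> k \<le> n + 1 \<and> l \<le> n + 1 \<and> i + j = k + l
           \<longrightarrow> x (2 + i) * x (2 + j) = x (2 + k) * x (2 + l))
     \<and> (\<forall>i\<le>n. x 0 * x (2 + (i + 1)) = x 1 * x (2 + i))
     \<and> (\<forall>i\<le>n. x (n + 4) * x (2 + i) + x 1 ^ n * x (2 + (i + 1))
                 = x (2 + (i + 1)) * x (2 + (n + 1)))
     \<and> x (n + 4) * x 0 + x 1 ^ (n + 1) = x 1 * x (2 + (n + 1))}"

text \<open>A map G from a subset Y of A^(n+5) to Q is a morphism: locally on a basic
open set D(q) of Y it lands in one chart with coordinates given by regular
functions (common-denominator fractions).\<close>
definition morph_into_Q :: "nat \<Rightarrow> (nat \<Rightarrow> complex) set \<Rightarrow>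
    ((nat \<Rightarrow> complex) \<Rightarrow> (bool \<times> pt3) set) \<Rightarrow> bool" where
  "morph_into_Q n Y G = (\<forall>y\<in>Y. \<exists>i q a b c.
     q \<in> polyfuns (n + 5) \<and> a \<in> polyfuns (n + 5) \<and> b \<in> polyfuns (n + 5)
     \<and> c \<in> polyfuns (n + 5) \<and> q y \<noteq> 0
     \<and> (\<forall>y'\<in>Y. q y' \<noteq> 0 \<longrightarrow> G y' = chart n i (a y' / q y', b y' / q y', c y' / q y')))"

end

theory Submission
  imports Defs "HOL-Computational_Algebra.Polynomial"
begin


lemma coord_cases:
  fixes k n :: nat
  obtains "k = 0" | "k = 1" | i where "i \<le> n+1" "k = 2+i" | "k = n+4" | "k \<ge> n+5"
proof -
  consider "k = 0" | "k = 1" | "2 \<le> k \<and> k \<le> n+3" | "k = n+4" | "k \<ge> n+5" by linarith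
  then show ?thesis
  proof cases
    case 3 then show ?thesis using that(3)[of "k-2"] by auto
  qed (use that in auto)
qed

lemma pr0:
  "psi_rep n False (t,u,v) 0 = t*v"
  "psi_rep n False (t,u,v) (Suc 0) = v"
  "i \<le> n+1 \<Longrightarrow> psi_rep n False (t,u,v) (2+i) = t^(n+1-i)*(t*u+v^n)"
  "psi_rep n False (t,u,v) (n+4) = u"
  "k \<ge> n+5 \<Longrightarrow> psi_rep n False (t,u,v) k = 0"
  unfolding psi_rep_def
  apply simp_all
  apply (subgoal_tac "n + 2 - i = Suc (n+1-i)")
   apply (simp add: algebra_simps)
  apply linarith
  done

lemma pr1:
  "psi_rep n True (s,a,b) 0 = b"
  "psi_rep n True (s,a,b) (Suc 0) = s*b"
  "i \<le> n+1 \<Longrightarrow> psi_rep n True (s,a,b) (2+i) = s^i*a"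
  "psi_rep n True (s,a,b) (n+4) = s^(n+2)*a - s^(n+1)*b^n"
  "k \<ge> n+5 \<Longrightarrow> psi_rep n True (s,a,b) k = 0"
  unfolding psi_rep_def by simp_all

lemma coord_ext:
  fixes f g :: "nat \<Rightarrow> complex"
  assumes "f 0 = g 0" "f (Suc 0) = g (Suc 0)" "\<And>i. i \<le> n+1 \<Longrightarrow> f (2+i) = g (2+i)"
    "f (n+4) = g (n+4)" "\<And>k. k \<ge> n+5 \<Longrightarrow> f k = g k"
  shows "f = g"
proof
  fix k show "f k = g k" by (rule coord_cases[where k=k and n=n]) (use assms in auto)
qed

lemma glue_compat:
  assumes t: "t \<noteq> 0"
  shows "psi_rep n True (glue n (t,u,v)) = psi_rep n False (t,u,v)"
proof (rule coord_ext[where n=n])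
  have g: "glue n (t,u,v) = (inverse t, t ^ (n + 1) * v ^ n + t ^ (n + 2) * u, t * v)"
    by (simp add: glue_def)
  show "psi_rep n True (glue n (t,u,v)) 0 = psi_rep n False (t,u,v) 0" by (simp add: g pr0 pr1)
  show "psi_rep n True (glue n (t,u,v)) (Suc 0) = psi_rep n False (t,u,v) (Suc 0)" using t by (simp add: g pr0 pr1)
  show "psi_rep n True (glue n (t,u,v)) (n+4) = psi_rep n False (t,u,v) (n+4)"
    using t by (simp add: g pr0 pr1 field_simps power_mult_distrib)
  show "psi_rep n True (glue n (t,u,v)) k = psi_rep n False (t,u,v) k" if "k \<ge> n+5" for k
    using that by (simp add: g pr0 pr1)
  fix i assume i: "i \<le> n+1"
  have e1: "t^(n+1) = t^(n+1-i)*t^i" using i by (simp flip: power_add)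
  have e2: "t^(n+2) = t^(n+1-i)*t^i*t" using i by (simp flip: power_add power_Suc2)
  have l: "psi_rep n True (glue n (t,u,v)) (2+i) = inverse t ^ i * (t ^ (n + 1) * v ^ n + t ^ (n + 2) * u)"
    by (simp only: g pr1(3)[OF i])
  have r: "psi_rep n False (t,u,v) (2+i) = t^(n+1-i)*(t*u+v^n)"
    by (simp only: pr0(3)[OF i])
  show "psi_rep n True (glue n (t,u,v)) (2+i) = psi_rep n False (t,u,v) (2+i)"
    unfolding l r e1 e2 using t by (simp add: field_simps)
qed

lemma glue_inj:
  assumes "t \<noteq> 0" "t' \<noteq> 0" "glue n (t,u,v) = glue n (t',u',v')"
  shows "(t,u,v) = (t',u',v')"
proof -
  have tt: "t = t'" using assms by (simp add: glue_def)
  have vv: "v = v'" using assms tt by (simp add: glue_def)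
  have "t ^ (n + 2) * u = t ^ (n + 2) * u'" using assms tt vv by (simp add: glue_def)
  then have "u = u'" using assms by simp
  then show ?thesis using tt vv by simp
qed

lemma Qrel_equiv: "equiv UNIV (Qrel n)"
proof (rule equivI)
  show "refl (Qrel n)" by (auto simp: refl_on_def Qrel_def)
  show "sym (Qrel n)" by (auto simp: sym_def Qrel_def)
  show "trans (Qrel n)"
  proof (rule transI)
    fix x y z assume xy: "(x,y) \<in> Qrel n" and yz: "(y,z) \<in> Qrel n"
    show "(x,z) \<in> Qrel n"
    proof (cases "x = y \<or> y = z")
      case True then show ?thesis using xy yz by auto
    next
      case False
      then have A: "(fst x = False \<and> fst y = True \<and> fst (snd x) \<noteq> 0 \<and> snd y = glue n (snd x))
         \<or> (fst x = True \<and> fst y = False \<and> fst (snd y) \<noteq> 0 \<and> snd x = glue n (snd y))"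
        and B: "(fst y = False \<and> fst z = True \<and> fst (snd y) \<noteq> 0 \<and> snd z = glue n (snd y))
         \<or> (fst y = True \<and> fst z = False \<and> fst (snd z) \<noteq> 0 \<and> snd y = glue n (snd z))"
        using xy yz unfolding Qrel_def by auto
      show ?thesis
      proof (cases "fst x")
        case True
        then have "snd x = glue n (snd y)" "snd z = glue n (snd y)" "fst z" using A B by auto
        then have "x = z" using True by (simp add: prod_eq_iff)
        then show ?thesis unfolding Qrel_def by simp
      next
        case False
        then have 1: "fst (snd x) \<noteq> 0" "fst (snd z) \<noteq> 0" "glue n (snd x) = glue n (snd z)" "\<not> fst z"
          using A B by auto
        have "snd x = snd z" using glue_inj[of "fst (snd x)" "fst (snd z)" n "fst (snd (snd x))" "snd (snd (snd x))"
            "fst (snd (snd z))" "snd (snd (snd z))"] 1 by simp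
        then have "x = z" using False 1 by (simp add: prod_eq_iff)
        then show ?thesis unfolding Qrel_def by simp
      qed
    qed
  qed
qed simp

lemma chart_eq: "((i,p),(j,q)) \<in> Qrel n \<Longrightarrow> chart n i p = chart n j q"
  unfolding chart_def using Qrel_equiv equiv_class_eq by fast

lemma chart_Qpts: "chart n i p \<in> Qpts n"
  unfolding chart_def Qpts_def by (rule quotientI) simp

lemma Qpts_chart: "x \<in> Qpts n \<Longrightarrow> \<exists>i p. x = chart n i p"
  unfolding chart_def Qpts_def by (auto elim!: quotientE)

lemma well_def:
  "(a, b) \<in> Qrel n \<Longrightarrow> psi_rep n (fst a) (snd a) = psi_rep n (fst b) (snd b)"
proof -
  assume ab: "(a,b) \<in> Qrel n"
  have *: "psi_rep n True (glue n q) = psi_rep n False q" if "fst q \<noteq> 0" for q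
    using glue_compat[of "fst q" n "fst (snd q)" "snd (snd q)"] that by (cases q) auto
  show ?thesis using ab *[of "snd a"] *[of "snd b"] unfolding Qrel_def by auto
qed

lemma psi_chart: "psi n (chart n i p) = psi_rep n i p"
proof -
  have ne: "(i,p) \<in> chart n i p" unfolding chart_def Qrel_def by simp
  define r where "r = (SOME r. r \<in> chart n i p)"
  have "r \<in> chart n i p" unfolding r_def using ne by (rule someI)
  then have "((i,p), r) \<in> Qrel n" unfolding chart_def by simp
  then have "psi_rep n i p = psi_rep n (fst r) (snd r)" using well_def by fastforce
  then show ?thesis unfolding psi_def r_def[symmetric] by (cases r) simp
qed

lemma psi_rep0_Phat: "psi_rep n False (t,u,v) \<in> Phat n"
proof -
  define x where "x = psi_rep n False (t,u,v)"
  define w where "w = t*u+v^n"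
  have Y: "x (2+i) = t^(n+1-i)*w" if "i \<le> n+1" for i
    unfolding x_def w_def using pr0(3)[OF that] .
  have X0: "x 0 = t*v" and X1: "x 1 = v" and Z: "x (n+4) = u" and K: "\<And>k. k \<ge> n+5 \<Longrightarrow> x k = 0"
    unfolding x_def using pr0 by auto
  have "x \<in> Phat n"
    unfolding Phat_def mem_Collect_eq
  proof (intro conjI allI impI)
    show "x k = 0" if "n+5 \<le> k" for k using K that .
    fix i j k l assume h: "i \<le> n + 1 \<and> j \<le> n + 1 \<and> k \<le> n + 1 \<and> l \<le> n + 1 \<and> i + j = k + l"
    have e: "(n+1-i)+(n+1-j) = (n+1-k)+(n+1-l)" using h by linarith
    have ee: "t^(n+1-i)*t^(n+1-j) = t^(n+1-k)*t^(n+1-l)" by (simp only: e flip: power_add)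
    have "x (2 + i) * x (2 + j) = (t^(n+1-i)*t^(n+1-j))*(w*w)"
      using h by (simp only: Y mult_ac)
    also have "\<dots> = (t^(n+1-k)*t^(n+1-l))*(w*w)" by (simp only: ee)
    also have "\<dots> = x (2 + k) * x (2 + l)" using h by (simp only: Y mult_ac)
    finally show "x (2 + i) * x (2 + j) = x (2 + k) * x (2 + l)" .
  next
    fix i assume i: "i \<le> n"
    have e: "n+1-i = Suc (n-i)" using i by linarith
    have Yi: "x (2+i) = t^Suc (n-i)*w" using Y[of i] i e by simp
    have Yi1: "x (2+(i+1)) = t^(n-i)*w" using Y[of "i+1"] i by simp
    have Yn: "x (2+(n+1)) = w" using Y[of "n+1"] by simp
    show "x 0 * x (2 + (i + 1)) = x 1 * x (2 + i)"
      unfolding X0 X1 Yi Yi1 by (simp add: algebra_simps)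
    show "x (n + 4) * x (2 + i) + x 1 ^ n * x (2 + (i + 1)) = x (2 + (i + 1)) * x (2 + (n + 1))"
      unfolding Z X1 Yi Yi1 Yn by (simp add: w_def algebra_simps)
  next
    show "x (n + 4) * x 0 + x 1 ^ (n + 1) = x 1 * x (2 + (n + 1))"
      unfolding Z X0 X1 using Y[of "n+1"] by (simp add: w_def algebra_simps)
  qed
  then show ?thesis unfolding x_def .
qed

lemma psi_rep1_Phat: "psi_rep n True (s,a,b) \<in> Phat n"
proof -
  define x where "x = psi_rep n True (s,a,b)"
  have Y: "x (2+i) = s^i*a" if "i \<le> n+1" for i
    unfolding x_def using pr1(3)[OF that] .
  have X0: "x 0 = b" and X1: "x 1 = s*b" and Z: "x (n+4) = s^(n+2)*a - s^(n+1)*b^n" and K: "\<And>k. k \<ge> n+5 \<Longrightarrow> x k = 0"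
    unfolding x_def using pr1 by auto
  have "x \<in> Phat n"
    unfolding Phat_def mem_Collect_eq
  proof (intro conjI allI impI)
    show "x k = 0" if "n+5 \<le> k" for k using K that .
    fix i j k l assume h: "i \<le> n + 1 \<and> j \<le> n + 1 \<and> k \<le> n + 1 \<and> l \<le> n + 1 \<and> i + j = k + l"
    have ee: "s^i*s^j = s^k*s^l" using h by (simp flip: power_add)
    have "x (2 + i) * x (2 + j) = (s^i*s^j)*(a*a)"
      using h by (simp only: Y mult_ac)
    also have "\<dots> = (s^k*s^l)*(a*a)" by (simp only: ee)
    also have "\<dots> = x (2 + k) * x (2 + l)" using h by (simp only: Y mult_ac)
    finally show "x (2 + i) * x (2 + j) = x (2 + k) * x (2 + l)" .
  next
    fix i assume i: "i \<le> n"
    have Yi: "x (2+i) = s^i*a" using Y[of i] i by simp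
    have Yi1: "x (2+(i+1)) = s^(i+1)*a" using Y[of "i+1"] i by simp
    have Yn: "x (2+(n+1)) = s^(n+1)*a" using Y[of "n+1"] by simp
    show "x 0 * x (2 + (i + 1)) = x 1 * x (2 + i)"
      unfolding X0 X1 Yi Yi1 by (simp add: algebra_simps)
    show "x (n + 4) * x (2 + i) + x 1 ^ n * x (2 + (i + 1)) = x (2 + (i + 1)) * x (2 + (n + 1))"
      unfolding Z X1 Yi Yi1 Yn by (simp add: algebra_simps power_add power_mult_distrib)
  next
    show "x (n + 4) * x 0 + x 1 ^ (n + 1) = x 1 * x (2 + (n + 1))"
      unfolding Z X0 X1 using Y[of "n+1"] by (simp add: algebra_simps power_mult_distrib)
  qed
  then show ?thesis unfolding x_def .
qed

lemma psi_rep_Phat: "psi_rep n i p \<in> Phat n"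
  using psi_rep0_Phat psi_rep1_Phat by (cases i; cases p) auto

lemma phat_eqs:
  assumes "y \<in> Phat n"
  shows "\<And>k. k \<ge> n+5 \<Longrightarrow> y k = 0"
    and "\<And>i j k l. i \<le> n + 1 \<Longrightarrow> j \<le> n + 1 \<Longrightarrow> k \<le> n + 1 \<Longrightarrow> l \<le> n + 1 \<Longrightarrow> i + j = k + l
           \<Longrightarrow> y (2 + i) * y (2 + j) = y (2 + k) * y (2 + l)"
    and "\<And>i. i \<le> n \<Longrightarrow> y 0 * y (2 + (i + 1)) = y 1 * y (2 + i)"
    and "\<And>i. i \<le> n \<Longrightarrow> y (n + 4) * y (2 + i) + y 1 ^ n * y (2 + (i + 1))
                 = y (2 + (i + 1)) * y (2 + (n + 1))"
    and "y (n + 4) * y 0 + y 1 ^ (n + 1) = y 1 * y (2 + (n + 1))"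
  using assms unfolding Phat_def by blast+

lemma down_ind:
  fixes Y :: "nat \<Rightarrow> complex"
  assumes "\<And>i. i \<le> n \<Longrightarrow> Y i = t * Y (i+1)" "i \<le> n+1"
  shows "Y i = t^(n+1-i) * Y (n+1)"
  using assms(2)
proof (induction i rule: inc_induct)
  case base then show ?case by simp
next
  case (step m)
  have "n+1-m = Suc (n+1-Suc m)" using step by linarith
  then show ?case using assms(1)[of m] step by simp
qed

lemma up_ind:
  fixes Y :: "nat \<Rightarrow> complex"
  assumes "\<And>i. i \<le> n \<Longrightarrow> Y (i+1) = s * Y i" "i \<le> n+1"
  shows "Y i = s^i * Y 0"
  using assms(2)
proof (induction i)
  case (Suc m) then show ?case using assms(1)[of m] by simp
qed simp

lemma inv_a1:
  assumes y: "y \<in> Phat n" and h: "y 1 \<noteq> 0"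
  shows "psi_rep n False (y 0 / y 1, y (n+4), y 1) = y"
proof (rule coord_ext[where n=n])
  define t where "t = y 0 / y 1"
  note E = phat_eqs[OF y]
  have w: "t * y (n+4) + y 1 ^ n = y (2+(n+1))"
    using E(5) h unfolding t_def by (simp add: field_simps)
  have Yd: "y (2+i) = t * y (2+(i+1))" if "i \<le> n" for i
    using E(3)[OF that] h unfolding t_def by (simp add: field_simps)
  show "psi_rep n False (y 0 / y 1, y (n + 4), y 1) 0 = y 0" using h by (simp add: pr0)
  show "psi_rep n False (y 0 / y 1, y (n + 4), y 1) (Suc 0) = y (Suc 0)" by (simp add: pr0)
  show "psi_rep n False (y 0 / y 1, y (n + 4), y 1) (n+4) = y (n+4)" by (simp add: pr0)
  show "psi_rep n False (y 0 / y 1, y (n + 4), y 1) k = y k" if "k \<ge> n+5" for k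
    using that E(1) by (simp add: pr0)
  fix i assume i: "i \<le> n+1"
  have "y (2+i) = t^(n+1-i) * y (2+(n+1))"
    using down_ind[of n "\<lambda>i. y (2+i)" t i] Yd i by simp
  then show "psi_rep n False (y 0 / y 1, y (n + 4), y 1) (2+i) = y (2+i)"
    unfolding pr0(3)[OF i] t_def[symmetric] w by simp
qed

lemma inv_a2:
  assumes y: "y \<in> Phat n" and h: "y 0 \<noteq> 0"
  shows "psi_rep n True (y 1 / y 0, y 2, y 0) = y"
proof (rule coord_ext[where n=n])
  define s where "s = y 1 / y 0"
  note E = phat_eqs[OF y]
  have Yu: "y (2+(i+1)) = s * y (2+i)" if "i \<le> n" for i
    using E(3)[OF that] h unfolding s_def by (simp add: field_simps)
  have Yi: "y (2+i) = s^i * y 2" if "i \<le> n+1" for i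
    using up_ind[of n "\<lambda>i. y (2+i)" s i] Yu that by simp
  have X1: "y 1 = s * y 0" using h unfolding s_def by simp
  show "psi_rep n True (y 1 / y 0, y 2, y 0) 0 = y 0" by (simp add: pr1)
  show "psi_rep n True (y 1 / y 0, y 2, y 0) (Suc 0) = y (Suc 0)" using h by (simp add: pr1)
  show "psi_rep n True (y 1 / y 0, y 2, y 0) k = y k" if "k \<ge> n+5" for k
    using that E(1) by (simp add: pr1)
  show "psi_rep n True (y 1 / y 0, y 2, y 0) (2+i) = y (2+i)" if i: "i \<le> n+1" for i
    unfolding pr1(3)[OF i] s_def[symmetric] using Yi[OF i] by simp
  have "y (n+4) * y 0 = s^(n+2) * y 2 * y 0 - s^(n+1) * y 0 ^ n * y 0"
  proof -
    have "y (n+4) * y 0 = y 1 * y (2+(n+1)) - y 1 ^ (n+1)" using E(5) by (simp add: algebra_simps)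
    also have "\<dots> = s * y 0 * (s^(n+1) * y 2) - (s * y 0)^(n+1)"
      using Yi[of "n+1"] X1 by simp
    finally show ?thesis by (simp add: algebra_simps power_mult_distrib)
  qed
  then have "y (n+4) = s^(n+2) * y 2 - s^(n+1) * y 0 ^ n" using h
    by (metis (no_types, lifting) left_diff_distrib mult_cancel_right)
  then show "psi_rep n True (y 1 / y 0, y 2, y 0) (n+4) = y (n+4)"
    unfolding s_def[symmetric] by (simp add: pr1)
qed

lemma inv_a3:
  assumes y: "y \<in> Phat n" and h: "y (n+4) \<noteq> 0"
  shows "psi_rep n False ((y (n+3) - y 1 ^ n) / y (n+4), y (n+4), y 1) = y"
proof (rule coord_ext[where n=n])
  define t where "t = (y (n+3) - y 1 ^ n) / y (n+4)"
  note E = phat_eqs[OF y]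
  have n3: "2+(n+1) = n+3" by simp
  have w: "t * y (n+4) + y 1 ^ n = y (2+(n+1))"
    using h unfolding t_def n3 by (simp add: field_simps)
  have Yd: "y (2+i) = t * y (2+(i+1))" if "i \<le> n" for i
    using E(4)[OF that] h unfolding t_def n3 by (simp add: field_simps)
  have "y (n+4) * y 0 = y 1 * (y (n+3) - y 1 ^ n)" using E(5) unfolding n3 by (simp add: algebra_simps)
  then show "psi_rep n False ((y (n+3) - y 1 ^ n) / y (n+4), y (n+4), y 1) 0 = y 0" using h
    by (simp add: pr0 field_simps)
  show "psi_rep n False ((y (n+3) - y 1 ^ n) / y (n+4), y (n+4), y 1) (Suc 0) = y (Suc 0)" by (simp add: pr0)
  show "psi_rep n False ((y (n+3) - y 1 ^ n) / y (n+4), y (n+4), y 1) (n+4) = y (n+4)" by (simp add: pr0)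
  show "psi_rep n False ((y (n+3) - y 1 ^ n) / y (n+4), y (n+4), y 1) k = y k" if "k \<ge> n+5" for k
    using that E(1) by (simp add: pr0)
  fix i assume i: "i \<le> n+1"
  have "y (2+i) = t^(n+1-i) * y (2+(n+1))"
    using down_ind[of n "\<lambda>i. y (2+i)" t i] Yd i by simp
  then show "psi_rep n False ((y (n+3) - y 1 ^ n) / y (n+4), y (n+4), y 1) (2+i) = y (2+i)"
    unfolding pr0(3)[OF i] t_def[symmetric] w by simp
qed

lemma inv_a4:
  assumes y: "y \<in> Phat n" and h: "y 2 \<noteq> 0"
  shows "psi_rep n True (y 3 / y 2, y 2, y 0) = y"
proof (rule coord_ext[where n=n])
  define s where "s = y 3 / y 2"
  note E = phat_eqs[OF y]
  have Yu: "y (2+(i+1)) = s * y (2+i)" if "i \<le> n" for i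
  proof -
    have "y (2+(i+1)) * y (2+0) = y (2+1) * y (2+i)" using E(2)[of "i+1" 0 1 i] that by simp
    then show ?thesis using h unfolding s_def by (simp add: field_simps eval_nat_numeral)
  qed
  have Yi: "y (2+i) = s^i * y 2" if "i \<le> n+1" for i
    using up_ind[of n "\<lambda>i. y (2+i)" s i] Yu that by simp
  have X1: "y 1 = s * y 0" using E(3)[of 0] h unfolding s_def by (simp add: field_simps eval_nat_numeral)
  have Y1: "y 3 = s * y 2" using h unfolding s_def by simp
  show "psi_rep n True (y 3 / y 2, y 2, y 0) 0 = y 0" by (simp add: pr1)
  show "psi_rep n True (y 3 / y 2, y 2, y 0) (Suc 0) = y (Suc 0)" using X1 unfolding s_def by (simp add: pr1)
  show "psi_rep n True (y 3 / y 2, y 2, y 0) k = y k" if "k \<ge> n+5" for k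
    using that E(1) by (simp add: pr1)
  show "psi_rep n True (y 3 / y 2, y 2, y 0) (2+i) = y (2+i)" if i: "i \<le> n+1" for i
    unfolding pr1(3)[OF i] s_def[symmetric] using Yi[OF i] by simp
  have "y (n+4) * y 2 = s^(n+2) * y 2 * y 2 - s^(n+1) * y 0 ^ n * y 2"
  proof -
    have "y (n+4) * y (2+0) = y (2+1) * y (2+(n+1)) - y 1 ^ n * y (2+1)" using E(4)[of 0] by (simp add: algebra_simps)
    also have "\<dots> = s * y 2 * (s^(n+1) * y 2) - (s * y 0)^n * (s * y 2)"
      using Yi[of "n+1"] X1 Y1 by (simp add: numeral_eq_Suc)
    finally show ?thesis by (simp add: algebra_simps power_mult_distrib eval_nat_numeral)
  qed
  then have "y (n+4) = s^(n+2) * y 2 - s^(n+1) * y 0 ^ n" using h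
    by (metis (no_types, lifting) left_diff_distrib mult_cancel_right)
  then show "psi_rep n True (y 3 / y 2, y 2, y 0) (n+4) = y (n+4)"
    unfolding s_def[symmetric] by (simp add: pr1)
qed

lemma psi_C: 
  assumes n: "n \<ge> 1" shows "psi_rep n i (t,0,0) = (\<lambda>_. 0)"
proof (rule coord_ext[where n=n])
  show "psi_rep n i (t,0,0) 0 = 0" by (cases i) (simp_all add: pr0 pr1)
  show "psi_rep n i (t,0,0) (Suc 0) = 0" by (cases i) (simp_all add: pr0 pr1)
  show "psi_rep n i (t,0,0) (n+4) = 0" using n by (cases i) (simp_all add: pr0 pr1 power_0_left)
  show "psi_rep n i (t,0,0) k = 0" if "k \<ge> n+5" for k using that by (cases i) (simp_all add: pr0 pr1)
  show "psi_rep n i (t,0,0) (2+j) = 0" if j: "j \<le> n+1" for j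
    using n by (cases i) (simp_all only: pr0(3)[OF j] pr1(3)[OF j], simp_all add: power_0_left)
qed

lemma psi_zero:
  assumes "psi_rep n i (t,u,v) = (\<lambda>_. 0)"
  shows "u = 0 \<and> v = 0"
proof (cases i)
  case True
  have "psi_rep n i (t,u,v) 0 = 0" "psi_rep n i (t,u,v) (2+0) = 0" using assms by simp_all
  then show ?thesis using True pr1(1)[of n t u v] pr1(3)[of 0 n t u v] by simp
next
  case False
  have "psi_rep n i (t,u,v) 1 = 0" "psi_rep n i (t,u,v) (n+4) = 0" using assms by simp_all
  then show ?thesis using False pr0 by simp
qed

lemma phat_nz:
  assumes y: "y \<in> Phat n" and n: "n \<ge> 1" and nz: "y \<noteq> (\<lambda>_. 0)"
  shows "y 1 \<noteq> 0 \<or> y 0 \<noteq> 0 \<or> y (n+4) \<noteq> 0 \<or> y 2 \<noteq> 0"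
proof (rule ccontr)
  assume "\<not> ?thesis"
  then have z: "y 1 = 0" "y 0 = 0" "y (n+4) = 0" "y 2 = 0" by auto
  note E = phat_eqs[OF y]
  have n0: "y 1 ^ n = 0" using z n by simp
  have "y (2+(n+1)) * y (2+(n+1)) = 0" using E(4)[of n] z n0 n by (simp add: power_0_left)
  then have Yn: "y (2+(n+1)) = 0" by simp
  have Yi: "y (2+i) = 0" if i: "i \<le> n+1" for i
  proof (cases "2*i \<le> n+1")
    case True
    have "y (2+i) * y (2+i) = y (2+0) * y (2+2*i)" using E(2)[of i i 0 "2*i"] i True by simp
    then show ?thesis using z by simp
  next
    case False
    have "y (2+i) * y (2+i) = y (2+(2*i-(n+1))) * y (2+(n+1))"
      using E(2)[of i i "2*i-(n+1)" "n+1"] i False by simp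
    then show ?thesis using Yn by simp
  qed
  have "y = (\<lambda>_. 0)"
    by (rule coord_ext[where n=n]) (use z Yi E(1) in auto)
  then show False using nz by simp
qed

definition Ginv :: "nat \<Rightarrow> (nat \<Rightarrow> complex) \<Rightarrow> (bool \<times> pt3) set" where
  "Ginv n y = (if y 1 \<noteq> 0 then chart n False (y 0 / y 1, y (n+4), y 1)
     else if y 0 \<noteq> 0 then chart n True (y 1 / y 0, y 2, y 0)
     else if y (n+4) \<noteq> 0 then chart n False ((y (n+3) - y 1 ^ n) / y (n+4), y (n+4), y 1)
     else chart n True (y 3 / y 2, y 2, y 0))"

lemma G_psi0:
  assumes n: "n \<ge> 1" and nz: "psi_rep n False (t,u,v) \<noteq> (\<lambda>_. 0)"
  shows "Ginv n (psi_rep n False (t,u,v)) = chart n False (t,u,v)"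
proof -
  define y where "y = psi_rep n False (t,u,v)"
  have y0: "y 0 = t*v" and y1: "y 1 = v" and y4: "y (n+4) = u" unfolding y_def by (simp_all add: pr0)
  have y3': "y (2+(n+1)) = t*u+v^n" using pr0(3)[of "n+1" n t u v] unfolding y_def by simp
  have "n+3 = 2+(n+1)" by simp
  then have y3: "y (n+3) = t*u+v^n" using y3' by (simp only:)
  show ?thesis
  proof (cases "v = 0")
    case False then show ?thesis unfolding y_def[symmetric] Ginv_def using y0 y1 y4 by simp
  next
    case True
    then have "u \<noteq> 0" using nz psi_C[OF n] by auto
    then show ?thesis unfolding y_def[symmetric] Ginv_def using y0 y1 y4 y3 True n by simp
  qed
qed

lemma G_psi1:
  assumes n: "n \<ge> 1" and nz: "psi_rep n True (s,a,b) \<noteq> (\<lambda>_. 0)"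
  shows "Ginv n (psi_rep n True (s,a,b)) = chart n True (s,a,b)"
proof -
  define y where "y = psi_rep n True (s,a,b)"
  have y0: "y 0 = b" and y1: "y 1 = s*b" and y4: "y (n+4) = s^(n+2)*a - s^(n+1)*b^n"
    unfolding y_def by (simp_all add: pr1)
  have y3'': "y (2+(n+1)) = s^(n+1)*a" using pr1(3)[of "n+1" n s a b] unfolding y_def by simp
  have "n+3 = 2+(n+1)" by simp
  then have y3: "y (n+3) = s^(n+1)*a" using y3'' by (simp only:)
  have y2: "y 2 = a" using pr1(3)[of 0 n s a b] unfolding y_def by simp
  have y3': "y 3 = s*a" using pr1(3)[of 1 n s a b] unfolding y_def by simp
  show ?thesis
  proof (cases "s*b = 0")
    case False
    then have sb: "s \<noteq> 0" "b \<noteq> 0" by auto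
    have "glue n (1/s, s^(n+2)*a - s^(n+1)*b^n, s*b) = (s,a,b)"
      using sb by (simp add: glue_def field_simps power_mult_distrib)
    then have "chart n False (1/s, s^(n+2)*a - s^(n+1)*b^n, s*b) = chart n True (s,a,b)"
      using sb by (intro chart_eq) (simp add: Qrel_def)
    moreover have "b / (s*b) = 1/s" using sb by simp
    ultimately show ?thesis unfolding y_def[symmetric] Ginv_def using y0 y1 y4 False by simp
  next
    case sb0: True
    show ?thesis
    proof (cases "b = 0")
      case False
      then have "s = 0" using sb0 by simp
      then show ?thesis unfolding y_def[symmetric] Ginv_def using y0 y1 y2 False by simp
    next
      case b0: True
      show ?thesis
      proof (cases "s^(n+2)*a = 0")
        case False
        then have sa: "s \<noteq> 0" "a \<noteq> 0" by auto
        have "glue n (1/s, s^(n+2)*a, 0) = (s,a,0)"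
          using sa n by (simp add: glue_def field_simps power_0_left)
        then have "chart n False (1/s, s^(n+2)*a, 0) = chart n True (s,a,0)"
          using sa by (intro chart_eq) (simp add: Qrel_def)
        moreover have "(s^(n+1)*a - 0) / (s^(n+2)*a) = 1/s" using sa by (simp add: field_simps)
        ultimately show ?thesis unfolding y_def[symmetric] Ginv_def using y0 y1 y4 y3 b0 n False
          by (simp add: power_0_left)
      next
        case True
        have "a \<noteq> 0" using nz psi_C[OF n] b0 by auto
        then show ?thesis unfolding y_def[symmetric] Ginv_def using y0 y1 y4 y2 y3' b0 n True
          by (simp add: power_0_left)
      qed
    qed
  qed
qed

lemma G_psi:
  assumes "n \<ge> 1" "psi_rep n i p \<noteq> (\<lambda>_. 0)"
  shows "Ginv n (psi_rep n i p) = chart n i p"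
  using assms G_psi0 G_psi1 by (cases i; cases p) auto



lemma pf_pow: "p \<in> polyfuns m \<Longrightarrow> (\<lambda>x. p x ^ j) \<in> polyfuns m"
proof (induction j)
  case 0 then show ?case using polyfuns.const[of 1 m] by simp
next
  case (Suc j) then show ?case using polyfuns.mult[OF Suc(2) Suc.IH[OF Suc(2)]] by simp
qed

lemma pf_diff: "p \<in> polyfuns m \<Longrightarrow> q \<in> polyfuns m \<Longrightarrow> (\<lambda>x. p x - q x) \<in> polyfuns m"
proof -
  assume p: "p \<in> polyfuns m" and q: "q \<in> polyfuns m"
  have "(\<lambda>x. (-1) * q x) \<in> polyfuns m" by (rule polyfuns.mult[OF polyfuns.const q])
  from polyfuns.add[OF p this] show ?thesis by simp
qed

lemma pf_var: "i < m \<Longrightarrow> (\<lambda>x. x i) \<in> polyfuns m" by (rule polyfuns.var)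

lemma pf_if: "f \<in> polyfuns m \<Longrightarrow> g \<in> polyfuns m \<Longrightarrow> (\<lambda>x. if c then f x else g x) \<in> polyfuns m"
  by (cases c) auto

lemma pf_comp:
  assumes "P \<in> polyfuns m" "\<And>k. k < m \<Longrightarrow> (\<lambda>x. g x k) \<in> polyfuns m'"
  shows "(\<lambda>x. P (g x)) \<in> polyfuns m'"
  using assms(1)
proof (induction P rule: polyfuns.induct)
  case (const c) then show ?case by (rule polyfuns.const)
next
  case (var i) then show ?case using assms(2) by simp
next
  case (add p q) then show ?case using polyfuns.add by blast
next
  case (mult p q) then show ?case using polyfuns.mult by blast
qed

lemma psi_rep_pf: "(\<lambda>x. psi_rep n i (x 0, x 1, x 2) k) \<in> polyfuns 3"
  unfolding psi_rep_def
  by (simp only: prod.case) 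
     (intro pf_if polyfuns.mult polyfuns.add pf_diff pf_pow polyfuns.const pf_var; simp)

lemma pf_cont:
  assumes "p \<in> polyfuns m"
  shows "continuous_on UNIV (\<lambda>z. p (\<lambda>k. if k = 0 then z else g k))"
  using assms
proof (induction p rule: polyfuns.induct)
  case (var i) then show ?case by (cases "i = 0") (simp_all add: continuous_on_id)
qed (auto intro!: continuous_intros)



lemma coeff_sum_list_map: "coeff (sum_list (map f L)) k = sum_list (map (\<lambda>m. coeff (f m) k) L)"
  by (induction L) auto

lemma poly_sum_list_map: "poly (sum_list (map f L)) t = sum_list (map (\<lambda>m. poly (f m) t) L)"
  by (induction L) auto

lemma sum_list_map_zero: "(\<And>m. m \<in> set L \<Longrightarrow> f m = 0) \<Longrightarrow> sum_list (map f L) = 0"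
  by (induction L) auto

lemma lpos_zero:
  fixes L :: "(complex \<times> nat \<times> nat) list"
  assumes H: "\<And>t. t \<noteq> 0 \<Longrightarrow> (\<Sum>(c,a,b)\<leftarrow>L. c * t^a * inverse t ^ b) = 0"
  shows "(\<Sum>(c,a,b)\<leftarrow>L. if b < a then c * t^(a-b) else 0) = 0"
proof -
  define N where "N = (\<Sum>(c,a,b)\<leftarrow>L. b)"
  have Nb: "b \<le> N" if "(c,a,b) \<in> set L" for c a b
  proof -
    have "b \<in> set (map (\<lambda>(c,a,b). b) L)" using that by force
    then show ?thesis unfolding N_def by (rule member_le_sum_list) simp
  qed
  define fA :: "complex \<times> nat \<times> nat \<Rightarrow> complex poly"
    where "fA = (\<lambda>(c,a,b). if b<a then monom c (a-b-1) else 0)"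
  define fB :: "complex \<times> nat \<times> nat \<Rightarrow> complex poly"
    where "fB = (\<lambda>(c,a,b). if b<a then 0 else monom c (N-(b-a)))"
  define Q where "Q = monom 1 (Suc N) * sum_list (map fA L) + sum_list (map fB L)"
  have trm: "t^Suc N * poly (fA m) t + poly (fB m) t = t^N * (case m of (c,a,b) \<Rightarrow> c * t^a * inverse t ^ b)"
    if "m \<in> set L" "t \<noteq> 0" for m t
  proof -
    obtain c a b where m: "m = (c,a,b)" by (cases m)
    have bN: "b \<le> N" using Nb that m by simp
    show ?thesis
    proof (cases "b < a")
      case True
      have "t^a = t^b * t^(a-b-1) * t" using True by (simp flip: power_add power_Suc2)
      then show ?thesis using True that unfolding m fA_def fB_def by (simp add: poly_monom field_simps)
    next
      case False
      have e1: "t^N = t^(N-(b-a)) * t^(b-a)" using bN by (simp flip: power_add)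
      have e2: "t^b = t^a * t^(b-a)" using False by (simp flip: power_add)
      show ?thesis using False that unfolding m fA_def fB_def by (simp add: poly_monom e1 e2 field_simps)
    qed
  qed
  have Qt: "poly Q t = 0" if "t \<noteq> 0" for t
  proof -
    have "poly Q t = t^Suc N * sum_list (map (\<lambda>m. poly (fA m) t) L) + sum_list (map (\<lambda>m. poly (fB m) t) L)"
      unfolding Q_def by (simp add: poly_sum_list_map poly_monom)
    also have "\<dots> = sum_list (map (\<lambda>m. t^Suc N * poly (fA m) t + poly (fB m) t) L)"
      by (simp add: sum_list_addf sum_list_const_mult)
    also have "\<dots> = sum_list (map (\<lambda>m. t^N * (case m of (c,a,b) \<Rightarrow> c * t^a * inverse t ^ b)) L)"
      using trm[OF _ that] by (intro arg_cong[where f=sum_list] map_cong) auto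
    also have "\<dots> = t^N * (\<Sum>(c,a,b)\<leftarrow>L. c * t^a * inverse t ^ b)"
      by (simp add: sum_list_const_mult)
    also have "\<dots> = 0" using H[OF that] by simp
    finally show ?thesis .
  qed
  have Q0: "Q = 0"
  proof (rule ccontr)
    assume "Q \<noteq> 0"
    then have "finite {x. poly Q x = 0}" by (rule poly_roots_finite)
    moreover have "UNIV - {0} \<subseteq> {x. poly Q x = 0}" using Qt by auto
    ultimately have "finite (UNIV - {0::complex})" by (rule finite_subset[rotated])
    then have "finite (UNIV :: complex set)" by simp
    then show False using infinite_UNIV_char_0 by blast
  qed
  have "coeff (sum_list (map fA L)) k = 0" for k
  proof -
    have cB: "coeff (sum_list (map fB L)) (Suc N + k) = 0"
      unfolding coeff_sum_list_map
      by (rule sum_list_map_zero) (auto simp: fB_def split: prod.splits)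
    have "coeff Q (Suc N + k) = coeff (sum_list (map fA L)) k"
      unfolding Q_def using cB by (simp add: coeff_monom_mult)
    then show ?thesis using Q0 by simp
  qed
  then have A0: "sum_list (map fA L) = 0" by (intro poly_eqI) simp
  have "(\<Sum>(c,a,b)\<leftarrow>L. if b < a then c * t^(a-b) else 0) = sum_list (map (\<lambda>m. t * poly (fA m) t) L)"
  proof (intro arg_cong[where f=sum_list] map_cong refl)
    fix m assume "m \<in> set L"
    obtain c a b where m: "m = (c,a,b)" by (cases m)
    show "(case m of (c,a,b) \<Rightarrow> if b < a then c * t^(a-b) else 0) = t * poly (fA m) t"
    proof (cases "b < a")
      case True
      have "a - b = Suc (a-b-1)" using True by simp
      then show ?thesis using True unfolding m fA_def by (simp add: poly_monom)
    qed (simp add: m fA_def)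
  qed
  also have "\<dots> = t * poly (sum_list (map fA L)) t" by (simp add: poly_sum_list_map sum_list_const_mult)
  also have "\<dots> = 0" using A0 by simp
  finally show ?thesis .
qed



definition mon3 :: "complex \<times> nat \<times> nat \<times> nat \<Rightarrow> (nat \<Rightarrow> complex) \<Rightarrow> complex" where
  "mon3 m x = (case m of (c,a,b,d) \<Rightarrow> c * x 0^a * x 1^b * x 2^d)"
definition mval :: "(complex \<times> nat \<times> nat \<times> nat) list \<Rightarrow> (nat \<Rightarrow> complex) \<Rightarrow> complex" where
  "mval L x = sum_list (map (\<lambda>m. mon3 m x) L)"
definition mm :: "complex \<times> nat \<times> nat \<times> nat \<Rightarrow> complex \<times> nat \<times> nat \<times> nat \<Rightarrow> complex \<times> nat \<times> nat \<times> nat" where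
  "mm m m' = (case m of (c,a,b,d) \<Rightarrow> case m' of (c',a',b',d') \<Rightarrow> (c*c', a+a', b+b', d+d'))"
fun mmul where
  "mmul [] L2 = []"
| "mmul (m#L1) L2 = map (mm m) L2 @ mmul L1 L2"

lemma mon3_mm: "mon3 (mm m m') x = mon3 m x * mon3 m' x"
  by (cases m; cases m') (simp add: mon3_def mm_def power_add algebra_simps)

lemma mval_map_mm: "mval (map (mm m) L) x = mon3 m x * mval L x"
  by (induction L) (simp_all add: mval_def mon3_mm algebra_simps)

lemma mval_mmul: "mval (mmul L1 L2) x = mval L1 x * mval L2 x"
proof (induction L1)
  case Nil then show ?case by (simp add: mval_def)
next
  case (Cons m L1)
  have "mval (mmul (m#L1) L2) x = mval (map (mm m) L2) x + mval (mmul L1 L2) x"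
    by (simp add: mval_def)
  also have "\<dots> = mon3 m x * mval L2 x + mval L1 x * mval L2 x"
    by (simp only: mval_map_mm Cons.IH)
  also have "mval (m#L1) x = mon3 m x + mval L1 x" by (simp add: mval_def)
  ultimately show ?case by (simp add: algebra_simps)
qed

lemma pf_rep: "p \<in> polyfuns 3 \<Longrightarrow> \<exists>L. \<forall>x. p x = mval L x"
proof (induction p rule: polyfuns.induct)
  case (const c)
  have "\<forall>x. c = mval [(c,0,0,0)] x" by (simp add: mval_def mon3_def)
  then show ?case by blast
next
  case (var i)
  then consider "i = 0" | "i = 1" | "i = 2" by linarith
  then show ?case
  proof cases
    case 1
    have "\<forall>x. x i = mval [(1,1,0,0)] x" using 1 by (simp add: mval_def mon3_def)
    then show ?thesis by blast
  next
    case 2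
    have "\<forall>x. x i = mval [(1,0,1,0)] x" using 2 by (simp add: mval_def mon3_def)
    then show ?thesis by blast
  next
    case 3
    have "\<forall>x. x i = mval [(1,0,0,1)] x" using 3 by (simp add: mval_def mon3_def)
    then show ?thesis by blast
  qed
next
  case (add p q)
  then obtain L1 L2 where "\<forall>x. p x = mval L1 x" "\<forall>x. q x = mval L2 x" by blast
  then have "\<forall>x. p x + q x = mval (L1 @ L2) x" by (simp add: mval_def)
  then show ?case by blast
next
  case (mult p q)
  then obtain L1 L2 where "\<forall>x. p x = mval L1 x" "\<forall>x. q x = mval L2 x" by blast
  then have "\<forall>x. p x * q x = mval (mmul L1 L2) x" by (simp add: mval_mmul)
  then show ?case by blast
qed

definition vec :: "complex \<Rightarrow> complex \<Rightarrow> complex \<Rightarrow> nat \<Rightarrow> complex" where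
  "vec t u v = (\<lambda>k. if k = 0 then t else if k = 1 then u else v)"

lemma mval_vec: "mval L (vec t u v) = (\<Sum>(c,a,b,d)\<leftarrow>L. c * t^a * u^b * v^d)"
  unfolding mval_def
proof (intro arg_cong[where f=sum_list] map_cong refl)
  fix m :: "complex \<times> nat \<times> nat \<times> nat"
  show "mon3 m (vec t u v) = (case m of (c,a,b,d) \<Rightarrow> c * t^a * u^b * v^d)"
    by (cases m) (simp add: mon3_def vec_def)
qed

definition inA :: "nat \<Rightarrow> (complex \<Rightarrow> complex \<Rightarrow> complex \<Rightarrow> complex) \<Rightarrow> bool" where
  "inA n f \<longleftrightarrow> (\<exists>P\<in>polyfuns (n+5). \<forall>t u v. f t u v = P (psi_rep n False (t,u,v)))"

lemma inA_const: "inA n (\<lambda>t u v. c)"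
  unfolding inA_def using polyfuns.const by fastforce

lemma inA_add: "inA n f \<Longrightarrow> inA n g \<Longrightarrow> inA n (\<lambda>t u v. f t u v + g t u v)"
  unfolding inA_def using polyfuns.add by fastforce

lemma inA_mult: "inA n f \<Longrightarrow> inA n g \<Longrightarrow> inA n (\<lambda>t u v. f t u v * g t u v)"
  unfolding inA_def using polyfuns.mult by fastforce

lemma inA_diff: "inA n f \<Longrightarrow> inA n g \<Longrightarrow> inA n (\<lambda>t u v. f t u v - g t u v)"
  unfolding inA_def using pf_diff by fastforce

lemma inA_pow: "inA n f \<Longrightarrow> inA n (\<lambda>t u v. f t u v ^ j)"
  by (induction j) (simp_all add: inA_const inA_mult)

lemma inA_sum_list: "(\<And>m. m \<in> set L \<Longrightarrow> inA n (g m)) \<Longrightarrow> inA n (\<lambda>t u v. \<Sum>m\<leftarrow>L. g m t u v)"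
  by (induction L) (simp_all add: inA_const inA_add)

lemma inA_coord: "k < n+5 \<Longrightarrow> (\<And>t u v. f t u v = psi_rep n False (t,u,v) k) \<Longrightarrow> inA n f"
  unfolding inA_def using polyfuns.var[of k "n+5"] by fastforce

lemma inA_tv: "inA n (\<lambda>t u v. t*v)" by (rule inA_coord[of 0]) (simp_all add: pr0)
lemma inA_v: "inA n (\<lambda>t u v. v)" by (rule inA_coord[of 1]) (simp_all add: pr0)
lemma inA_u: "inA n (\<lambda>t u v. u)" by (rule inA_coord[of "n+4"]) (simp_all add: pr0)
lemma inA_tw: "k \<le> n+1 \<Longrightarrow> inA n (\<lambda>t u v. t^k * (v^n + t*u))"
proof (rule inA_coord[of "2+(n+1-k)"])
  fix t u v assume k: "k \<le> n+1"
  have "n+1-(n+1-k) = k" using k by simp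
  then show "t^k * (v^n + t*u) = psi_rep n False (t,u,v) (2+(n+1-k))"
    using pr0(3)[of "n+1-k" n t u v] by (simp add: algebra_simps)
qed simp

lemma inA_tw_pow: "e \<le> (n+1)*al \<Longrightarrow> inA n (\<lambda>t u v. t^e * (v^n + t*u)^al)"
proof (induction al arbitrary: e)
  case 0 then show ?case using inA_const[of n 1] by simp
next
  case (Suc al)
  define k where "k = min e (n+1)"
  have k: "k \<le> n+1" "e - k \<le> (n+1)*al" using Suc.prems unfolding k_def by auto
  have "inA n (\<lambda>t u v. (t^k * (v^n + t*u)) * (t^(e-k) * (v^n + t*u)^al))"
    using inA_mult[OF inA_tw[OF k(1)] Suc.IH[OF k(2)]] by simp
  moreover have "t^k * (v^n + t*u) * (t^(e-k) * (v^n + t*u)^al) = t^e * (v^n + t*u)^Suc al" for t u v :: complex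
  proof -
    have "k + (e-k) = e" unfolding k_def by simp
    then have h: "t^k * t^(e-k) = t^e" by (metis power_add)
    have "t^k * (v^n + t*u) * (t^(e-k) * (v^n + t*u)^al) = (t^k * t^(e-k)) * ((v^n + t*u) * (v^n + t*u)^al)"
      by (simp only: mult_ac)
    then show ?thesis by (simp only: h power_Suc)
  qed
  ultimately show ?case by simp
qed

lemma inA_tv_pow: "e \<le> be \<Longrightarrow> inA n (\<lambda>t u v. t^e * v^be)"
proof -
  assume e: "e \<le> be"
  have "inA n (\<lambda>t u v. (t*v)^e * v^(be-e))" by (intro inA_mult inA_pow inA_tv inA_v)
  moreover have "(t*v)^e * v^(be-e) = t^e * v^be" for t v :: complex
    using e by (simp add: power_mult_distrib flip: power_add)
  ultimately show ?thesis by simp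
qed

lemma inA_twv: "e \<le> (n+1)*al + be \<Longrightarrow> inA n (\<lambda>t u v. t^e * (v^n + t*u)^al * v^be)"
proof -
  assume e: "e \<le> (n+1)*al + be"
  define e1 where "e1 = min e ((n+1)*al)"
  have "inA n (\<lambda>t u v. (t^e1 * (v^n + t*u)^al) * (t^(e-e1) * v^be))"
    using e by (intro inA_mult inA_tw_pow inA_tv_pow) (auto simp: e1_def)
  moreover have "(t^e1 * (v^n + t*u)^al) * (t^(e-e1) * v^be) = t^e * (v^n + t*u)^al * v^be" for t u v :: complex
  proof -
    have "e1 + (e-e1) = e" unfolding e1_def by simp
    then have "t^e1 * t^(e-e1) = t^e" by (metis power_add)
    then show ?thesis by (simp add: algebra_simps)
  qed
  ultimately show ?thesis by simp
qed



lemma sum_list_map_neg: "sum_list (map (\<lambda>m. - f m) L) = - sum_list (map f L :: complex list)"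
  by (induction L) auto

lemma inA_w: "inA n (\<lambda>t u v. v^n + t*u)"
  using inA_tw[of 0 n] by simp

lemma core:
  assumes p: "p \<in> polyfuns 3" and q: "q \<in> polyfuns 3"
    and rel: "\<And>t u v. t \<noteq> 0 \<Longrightarrow> p (vec t u v) = q (vec (inverse t) (t^(n+1)*v^n + t^(n+2)*u) (t*v))"
  shows "inA n (\<lambda>t u v. p (vec t u v))"
proof -
  obtain Lp where Lp: "\<forall>x. p x = mval Lp x" using pf_rep[OF p] by blast
  obtain Lq where Lq: "\<forall>x. q x = mval Lq x" using pf_rep[OF q] by blast
  have pv: "p (vec t u v) = (\<Sum>(c,a,b,d)\<leftarrow>Lp. c*t^a*u^b*v^d)" for t u v
    by (simp add: Lp mval_vec)
  have qv: "q (vec t u v) = (\<Sum>(c,a,b,d)\<leftarrow>Lq. c*t^a*u^b*v^d)" for t u v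
    by (simp add: Lq mval_vec)
  define f1 where "f1 w v = (\<lambda>(c::complex,a::nat,b::nat,d::nat). (c*(w-v^n)^b*v^d, a, b))" for w v :: complex
  define f2 where "f2 w v = (\<lambda>(c::complex,k::nat,al::nat,be::nat). (-(c*w^al*v^be), (n+1)*al+be, k))" for w v :: complex
  define Lw where "Lw w v = map (f1 w v) Lp @ map (f2 w v) Lq" for w v
  have lv: "(\<Sum>(c,a,b)\<leftarrow>Lw w v. c*t^a*inverse t^b) = 0" if t: "t \<noteq> 0" for w v t
  proof -
    have s1: "(\<Sum>(c,a,b)\<leftarrow>map (f1 w v) Lp. c*t^a*inverse t^b) = p (vec t ((w-v^n)/t) v)"
      unfolding pv map_map
    proof (intro arg_cong[where f=sum_list] map_cong refl)
      fix m :: "complex \<times> nat \<times> nat \<times> nat"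
      obtain c a b d where m: "m = (c,a,b,d)" by (cases m)
      show "((\<lambda>(c,a,b). c*t^a*inverse t^b) \<circ> f1 w v) m = (case m of (c,a,b,d) \<Rightarrow> c*t^a*((w-v^n)/t)^b*v^d)"
        unfolding m f1_def using t by (simp add: power_divide field_simps)
    qed
    have s2: "(\<Sum>(c,a,b)\<leftarrow>map (f2 w v) Lq. c*t^a*inverse t^b) = - q (vec (inverse t) (t^(n+1)*w) (t*v))"
    proof -
      have "(\<Sum>(c,a,b)\<leftarrow>map (f2 w v) Lq. c*t^a*inverse t^b)
          = (\<Sum>m\<leftarrow>Lq. - (case m of (c,k,al,be) \<Rightarrow> c*(inverse t)^k*(t^(n+1)*w)^al*(t*v)^be))"
        unfolding map_map
      proof (intro arg_cong[where f=sum_list] map_cong refl)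
        fix m :: "complex \<times> nat \<times> nat \<times> nat"
        obtain c k al be where m: "m = (c,k,al,be)" by (cases m)
        show "((\<lambda>(c,a,b). c*t^a*inverse t^b) \<circ> f2 w v) m = - (case m of (c,k,al,be) \<Rightarrow> c*(inverse t)^k*(t^(n+1)*w)^al*(t*v)^be)"
        proof -
          have pc: "(t^al)^n = (t^n)^al" by (simp flip: power_mult add: mult.commute)
          show ?thesis unfolding m f2_def using pc by (simp add: power_add power_mult power_mult_distrib algebra_simps)
        qed
      qed
      then show ?thesis by (simp add: sum_list_map_neg qv)
    qed
    have e: "t^(n+1)*v^n + t^(n+2)*((w-v^n)/t) = t^(n+1)*w"
      using t by (simp add: field_simps)
    have "(\<Sum>(c,a,b)\<leftarrow>Lw w v. c*t^a*inverse t^b) = p (vec t ((w-v^n)/t) v) - q (vec (inverse t) (t^(n+1)*w) (t*v))"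
      unfolding Lw_def map_append sum_list_append s1 s2 by simp
    also have "\<dots> = 0" using rel[OF t, of "(w-v^n)/t" v] unfolding e by simp
    finally show ?thesis .
  qed
  have lp: "(\<Sum>(c,a,b)\<leftarrow>Lw w v. if b < a then c*t^(a-b) else 0) = 0" for w v t
    by (rule lpos_zero) (rule lv)
  define Pneg where "Pneg t u v = (\<Sum>(c,a,b,d)\<leftarrow>Lp. if b < a then 0 else c*t^a*u^b*v^d)" for t u v :: complex
  define Ppos where "Ppos t u v = (\<Sum>(c,a,b,d)\<leftarrow>Lp. if b < a then c*t^a*u^b*v^d else 0)" for t u v :: complex
  define Qpos where "Qpos t w v = (\<Sum>(c,k,al,be)\<leftarrow>Lq. if k < (n+1)*al+be then c*t^((n+1)*al+be-k)*w^al*v^be else 0)"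
    for t w v :: complex
  have split: "p (vec t u v) = Pneg t u v + Ppos t u v" for t u v
    unfolding pv Pneg_def Ppos_def sum_list_addf[symmetric]
    by (intro arg_cong[where f=sum_list] map_cong refl) auto
  have PQ: "Ppos t u v = Qpos t (v^n + t*u) v" for t u v
  proof -
    define w where "w = v^n + t*u"
    have A: "Ppos t u v = (\<Sum>m\<leftarrow>map (f1 w v) Lp. case m of (c,a,b) \<Rightarrow> if b < a then c*t^(a-b) else 0)"
      unfolding Ppos_def map_map
    proof (intro arg_cong[where f=sum_list] map_cong refl)
      fix m :: "complex \<times> nat \<times> nat \<times> nat"
      obtain c a b d where m: "m = (c,a,b,d)" by (cases m)
      have "b < a \<Longrightarrow> t^a = t^b * t^(a-b)" by (simp flip: power_add)
      then show "(case m of (c,a,b,d) \<Rightarrow> if b < a then c*t^a*u^b*v^d else 0) =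
          ((\<lambda>m. case m of (c,a,b) \<Rightarrow> if b < a then c*t^(a-b) else 0) \<circ> f1 w v) m"
        unfolding m f1_def w_def by (simp add: power_mult_distrib algebra_simps)
    qed
    have B: "Qpos t w v = - (\<Sum>m\<leftarrow>map (f2 w v) Lq. case m of (c,a,b) \<Rightarrow> if b < a then c*t^(a-b) else 0)"
    proof -
      have "(\<Sum>m\<leftarrow>map (f2 w v) Lq. case m of (c,a,b) \<Rightarrow> if b < a then c*t^(a-b) else 0)
          = (\<Sum>m\<leftarrow>Lq. - (case m of (c,k,al,be) \<Rightarrow> if k < (n+1)*al+be then c*t^((n+1)*al+be-k)*w^al*v^be else 0))"
        unfolding map_map
      proof (intro arg_cong[where f=sum_list] map_cong refl)
        fix m :: "complex \<times> nat \<times> nat \<times> nat"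
        obtain c k al be where m: "m = (c,k,al,be)" by (cases m)
        show "((\<lambda>m. case m of (c,a,b) \<Rightarrow> if b < a then c*t^(a-b) else 0) \<circ> f2 w v) m =
            - (case m of (c,k,al,be) \<Rightarrow> if k < (n+1)*al+be then c*t^((n+1)*al+be-k)*w^al*v^be else 0)"
          unfolding m f2_def by (simp add: algebra_simps)
      qed
      then show ?thesis unfolding Qpos_def sum_list_map_neg by simp
    qed
    have "Ppos t u v - Qpos t w v = (\<Sum>m\<leftarrow>Lw w v. case m of (c,a,b) \<Rightarrow> if b < a then c*t^(a-b) else 0)"
      unfolding A B Lw_def by simp
    also have "\<dots> = 0" using lp[where w=w and v=v and t=t] by simp
    finally show ?thesis unfolding w_def by simp
  qed
  have fe: "(\<lambda>t u v. p (vec t u v)) = (\<lambda>t u v. Pneg t u v + Qpos t (v^n + t*u) v)"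
    using split PQ by (intro ext) simp
  have iN: "inA n (\<lambda>t u v. Pneg t u v)"
    unfolding Pneg_def
  proof (rule inA_sum_list)
    fix m :: "complex \<times> nat \<times> nat \<times> nat" assume "m \<in> set Lp"
    obtain c a b d where m: "m = (c,a,b,d)" by (cases m)
    show "inA n (\<lambda>t u v. case m of (c,a,b,d) \<Rightarrow> if b < a then 0 else c*t^a*u^b*v^d)"
    proof (cases "b < a")
      case True then show ?thesis unfolding m using inA_const[of n 0] by simp
    next
      case False
      have I: "inA n (\<lambda>t u v. c * ((v^n + t*u) - v^n)^a * u^(b-a) * v^d)"
        by (intro inA_mult inA_const inA_pow inA_diff inA_w inA_u inA_v)
      have eq: "c * ((v^n + t*u) - v^n)^a * u^(b-a) * v^d = c*t^a*u^b*v^d" for t u v :: complex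
      proof -
        have "u^b = u^a * u^(b-a)" using False by (simp flip: power_add)
        then show ?thesis by (simp add: power_mult_distrib)
      qed
      have EQ: "(\<lambda>t u v. c * ((v^n + t*u) - v^n)^a * u^(b-a) * v^d) = (\<lambda>t u v. c*t^a*u^b*v^d)"
        by (intro ext) (rule eq)
      have "inA n (\<lambda>t u v. c*t^a*u^b*v^d)" using I unfolding EQ .
      then show ?thesis unfolding m using False by simp
    qed
  qed
  have iQ: "inA n (\<lambda>t u v. Qpos t (v^n + t*u) v)"
    unfolding Qpos_def
  proof (rule inA_sum_list)
    fix m :: "complex \<times> nat \<times> nat \<times> nat" assume "m \<in> set Lq"
    obtain c k al be where m: "m = (c,k,al,be)" by (cases m)
    show "inA n (\<lambda>t u v. case m of (c,k,al,be) \<Rightarrow> if k < (n+1)*al+be then c*t^((n+1)*al+be-k)*(v^n+t*u)^al*v^be else 0)"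
    proof (cases "k < (n+1)*al+be")
      case False then show ?thesis unfolding m using inA_const[of n 0] by simp
    next
      case True
      have "inA n (\<lambda>t u v. c * (t^((n+1)*al+be-k) * (v^n + t*u)^al * v^be))"
        by (intro inA_mult inA_const inA_twv) simp
      then show ?thesis unfolding m using True by (simp add: mult.assoc)
    qed
  qed
  show ?thesis unfolding fe by (rule inA_add[OF iN iQ])
qed



lemma cont_zero:
  fixes h :: "complex \<Rightarrow> complex"
  assumes c: "continuous_on UNIV h" and z: "\<And>z. z \<noteq> 0 \<Longrightarrow> h z = 0"
  shows "h 0 = 0"
proof -
  have "(h \<longlongrightarrow> h 0) (at 0)" using c by (simp add: continuous_on_def)
  moreover have "(h \<longlongrightarrow> 0) (at 0)"
    by (rule tendsto_eventually) (auto simp: eventually_at_filter z)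
  ultimately show ?thesis using tendsto_unique by (metis at_neq_bot)
qed

lemma chart1_to_0:
  assumes s: "s \<noteq> 0"
  shows "chart n True (s,a,b) = chart n False (1/s, s^(n+2)*a - s^(n+1)*b^n, s*b)"
proof -
  have "glue n (1/s, s^(n+2)*a - s^(n+1)*b^n, s*b) = (s,a,b)"
    using s by (simp add: glue_def field_simps power_mult_distrib)
  then have "chart n False (1/s, s^(n+2)*a - s^(n+1)*b^n, s*b) = chart n True (s,a,b)"
    using s by (intro chart_eq) (simp add: Qrel_def)
  then show ?thesis by simp
qed

lemma vec_simps: "vec t u v 0 = t" "vec t u v 1 = u" "vec t u v 2 = v"
  by (simp_all add: vec_def)

lemma regQ_imp:
  assumes n: "n \<ge> 1" and r: "regQ n F"
  shows "\<exists>P\<in>polyfuns (n + 5). \<forall>x\<in>Qpts n. F x = P (psi n x)"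
proof -
  define p where "p = (\<lambda>x::nat\<Rightarrow>complex. F (chart n False (x 0, x 1, x 2)))"
  define q where "q = (\<lambda>x::nat\<Rightarrow>complex. F (chart n True (x 0, x 1, x 2)))"
  have pp: "p \<in> polyfuns 3" and qq: "q \<in> polyfuns 3" using r unfolding regQ_def p_def q_def by auto
  have pv: "p (vec t u v) = F (chart n False (t,u,v))" for t u v unfolding p_def by (simp add: vec_def)
  have qv: "q (vec t u v) = F (chart n True (t,u,v))" for t u v unfolding q_def by (simp add: vec_def)
  have rel: "p (vec t u v) = q (vec (inverse t) (t^(n+1)*v^n + t^(n+2)*u) (t*v))" if t: "t \<noteq> 0" for t u v
  proof -
    have "chart n False (t,u,v) = chart n True (glue n (t,u,v))"
      using t by (intro chart_eq) (simp add: Qrel_def)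
    then show ?thesis unfolding pv qv by (simp add: glue_def)
  qed
  have "inA n (\<lambda>t u v. p (vec t u v))" by (rule core[OF pp qq rel])
  then obtain P where P: "P \<in> polyfuns (n+5)" and PP: "\<And>t u v. p (vec t u v) = P (psi_rep n False (t,u,v))"
    unfolding inA_def by blast
  have c0: "F (chart n False pt) = P (psi_rep n False pt)" for pt
    using PP[of "fst pt" "fst (snd pt)" "snd (snd pt)"] unfolding pv by simp
  have c1nz: "F (chart n True (s,a,b)) = P (psi_rep n True (s,a,b))" if s: "s \<noteq> 0" for s a b
  proof -
    have "F (chart n True (s,a,b)) = P (psi_rep n False (1/s, s^(n+2)*a - s^(n+1)*b^n, s*b))"
      unfolding chart1_to_0[OF s] c0 ..
    also have "\<dots> = P (psi n (chart n False (1/s, s^(n+2)*a - s^(n+1)*b^n, s*b)))" by (simp add: psi_chart)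
    also have "\<dots> = P (psi_rep n True (s,a,b))" unfolding chart1_to_0[OF s, symmetric] psi_chart ..
    finally show ?thesis .
  qed
  have c1: "F (chart n True (s,a,b)) = P (psi_rep n True (s,a,b))" for s a b
  proof (cases "s = 0")
    case False then show ?thesis by (rule c1nz)
  next
    case True
    define g where "g = (\<lambda>k::nat. if k = 1 then a else b)"
    define h where "h = (\<lambda>z. q (vec z a b) - P (psi_rep n True (z,a,b)))"
    have PR: "(\<lambda>x. P (psi_rep n True (x 0, x 1, x 2))) \<in> polyfuns 3"
      by (rule pf_comp[OF P]) (rule psi_rep_pf)
    have vg: "vec z a b = (\<lambda>k. if k = 0 then z else g k)" for z unfolding vec_def g_def by auto
    have hc: "continuous_on UNIV h"
    proof -
      have 1: "continuous_on UNIV (\<lambda>z. q (\<lambda>k. if k = 0 then z else g k))" by (rule pf_cont[OF qq])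
      have 2: "continuous_on UNIV (\<lambda>z. (\<lambda>x. P (psi_rep n True (x 0, x 1, x 2))) (\<lambda>k. if k = 0 then z else g k))"
        by (rule pf_cont[OF PR])
      have "h = (\<lambda>z. q (\<lambda>k. if k = 0 then z else g k) - (\<lambda>x. P (psi_rep n True (x 0, x 1, x 2))) (\<lambda>k. if k = 0 then z else g k))"
        unfolding h_def vg by (simp add: g_def)
      then show ?thesis using continuous_on_diff[OF 1 2] by simp
    qed
    have "h z = 0" if "z \<noteq> 0" for z unfolding h_def qv using c1nz[OF that] by simp
    then have "h 0 = 0" by (rule cont_zero[OF hc])
    then show ?thesis using True unfolding h_def qv by simp
  qed
  have "\<forall>x\<in>Qpts n. F x = P (psi n x)"
  proof
    fix x assume "x \<in> Qpts n"
    then obtain i pt where x: "x = chart n i pt" using Qpts_chart by blast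
    show "F x = P (psi n x)"
    proof (cases i)
      case True then show ?thesis unfolding x psi_chart using c1[of "fst pt" "fst (snd pt)" "snd (snd pt)"] by simp
    next
      case False then show ?thesis unfolding x psi_chart using c0 by simp
    qed
  qed
  then show ?thesis using P by blast
qed

lemma regQ_if:
  assumes "P \<in> polyfuns (n + 5)" "\<forall>x\<in>Qpts n. F x = P (psi n x)"
  shows "regQ n F"
  unfolding regQ_def
proof
  fix i
  have "(\<lambda>x::nat\<Rightarrow>complex. F (chart n i (x 0, x 1, x 2))) = (\<lambda>x. P (psi_rep n i (x 0, x 1, x 2)))"
    using assms(2) chart_Qpts psi_chart by (intro ext) simp
  moreover have "(\<lambda>x. P (psi_rep n i (x 0, x 1, x 2))) \<in> polyfuns 3"
    by (rule pf_comp[OF assms(1)]) (rule psi_rep_pf)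
  ultimately show "(\<lambda>x. F (chart n i (x 0, x 1, x 2))) \<in> polyfuns 3" by simp
qed



lemma psi_nz:
  assumes "x \<in> Qpts n" "x \<notin> Ccurve n"
  shows "psi n x \<noteq> (\<lambda>_. 0)"
proof
  assume z: "psi n x = (\<lambda>_. 0)"
  obtain i t u v where x: "x = chart n i (t,u,v)" using Qpts_chart[OF assms(1)] by (metis prod_cases3)
  have "u = 0 \<and> v = 0" using z psi_zero unfolding x psi_chart by blast
  then have "x \<in> Ccurve n" unfolding x Ccurve_def by auto
  then show False using assms by simp
qed

lemma psi_Ginv:
  assumes n: "n \<ge> 1" and y: "y \<in> Phat n" and nz: "y \<noteq> (\<lambda>_. 0)"
  shows "psi n (Ginv n y) = y"
proof -
  have "n+3 = 2+(n+1)" by simp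
  show ?thesis
  proof (cases "y 1 \<noteq> 0")
    case True then show ?thesis unfolding Ginv_def using inv_a1[OF y] by (simp add: psi_chart)
  next
    case F1: False
    show ?thesis
    proof (cases "y 0 \<noteq> 0")
      case True then show ?thesis unfolding Ginv_def using F1 inv_a2[OF y] by (simp add: psi_chart)
    next
      case F2: False
      show ?thesis
      proof (cases "y (n+4) \<noteq> 0")
        case True then show ?thesis unfolding Ginv_def using F1 F2 inv_a3[OF y] by (simp add: psi_chart)
      next
        case False
        then have "y 2 \<noteq> 0" using phat_nz[OF y n nz] F1 F2 by simp
        then show ?thesis unfolding Ginv_def using F1 F2 False inv_a4[OF y] by (simp add: psi_chart)
      qed
    qed
  qed
qed

lemma Ginv_Qpts: "Ginv n y \<in> Qpts n"
  unfolding Ginv_def by (simp add: chart_Qpts)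

lemma C_psi: "n \<ge> 1 \<Longrightarrow> x \<in> Ccurve n \<Longrightarrow> psi n x = (\<lambda>_. 0)"
  unfolding Ccurve_def using psi_chart psi_C by auto

lemma Ginv_local:
  assumes n: "n \<ge> 1" and y: "y \<in> Phat n - {\<lambda>_. 0}" and e: "psi_rep n i pt = y"
  shows "Ginv n y = chart n i pt"
  using G_psi[OF n, of i pt] e y by auto

lemma morph_case:
  assumes "q \<in> polyfuns (n + 5)" "a \<in> polyfuns (n + 5)" "b \<in> polyfuns (n + 5)" "c \<in> polyfuns (n + 5)"
    "q y \<noteq> 0" "\<forall>y'\<in>Y. q y' \<noteq> 0 \<longrightarrow> G y' = chart n i (a y' / q y', b y' / q y', c y' / q y')"
  shows "\<exists>i q a b c. q \<in> polyfuns (n + 5) \<and> a \<in> polyfuns (n + 5) \<and> b \<in> polyfuns (n + 5)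
     \<and> c \<in> polyfuns (n + 5) \<and> q y \<noteq> 0
     \<and> (\<forall>y'\<in>Y. q y' \<noteq> 0 \<longrightarrow> G y' = chart n i (a y' / q y', b y' / q y', c y' / q y'))"
  using assms by blast

theorem mainTheorem17:
  fixes n :: nat
  assumes "n \<ge> 1"
  shows
    \<comment> \<open>the f_i, g_i, h are well defined on Q (compatible with the gluing)\<close>
    "(\<forall>a b. (a, b) \<in> Qrel n \<longrightarrow> psi_rep n (fst a) (snd a) = psi_rep n (fst b) (snd b))
     \<comment> \<open>psi maps Q into P-hat\<close>
     \<and> (\<forall>x\<in>Qpts n. psi n x \<in> Phat n)
     \<comment> \<open>psi contracts C to 0\<close>
     \<and> (\<forall>x\<in>Ccurve n. psi n x = (\<lambda>_. 0))
     \<comment> \<open>psi : Q - C -> P-hat - {0} is an isomorphism\<close>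
     \<and> bij_betw (psi n) (Qpts n - Ccurve n) (Phat n - {\<lambda>_. 0})
     \<and> (\<exists>G. (\<forall>y\<in>Phat n - {\<lambda>_. 0}. G y \<in> Qpts n - Ccurve n \<and> psi n (G y) = y)
          \<and> (\<forall>x\<in>Qpts n - Ccurve n. G (psi n x) = x)
          \<and> morph_into_Q n (Phat n - {\<lambda>_. 0}) G)
     \<comment> \<open>O(Q) = C[f_0, f_1, g_0, ..., g_(n+1), h]\<close>
     \<and> (\<forall>F. regQ n F \<longleftrightarrow> (\<exists>P\<in>polyfuns (n + 5). \<forall>x\<in>Qpts n. F x = P (psi n x)))
     \<comment> \<open>psi^* : O(P-hat) -> O(Q) is injective (surjectivity is the previous clause)\<close>
     \<and> (\<forall>P\<in>polyfuns (n + 5). (\<forall>x\<in>Qpts n. P (psi n x) = 0) \<longrightarrow> (\<forall>y\<in>Phat n. P y = 0))"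
proof -
  have n: "n \<ge> 1" by fact
  have c1: "\<forall>a b. (a, b) \<in> Qrel n \<longrightarrow> psi_rep n (fst a) (snd a) = psi_rep n (fst b) (snd b)"
    using well_def by blast
  have c2: "\<forall>x\<in>Qpts n. psi n x \<in> Phat n"
  proof
    fix x assume "x \<in> Qpts n"
    then obtain i pt where "x = chart n i pt" using Qpts_chart by blast
    then show "psi n x \<in> Phat n" by (simp add: psi_chart psi_rep_Phat)
  qed
  have c3: "\<forall>x\<in>Ccurve n. psi n x = (\<lambda>_. 0)" using C_psi[OF n] by blast
  have GA: "Ginv n y \<in> Qpts n - Ccurve n \<and> psi n (Ginv n y) = y" if y: "y \<in> Phat n - {\<lambda>_. 0}" for y
  proof -
    have e: "psi n (Ginv n y) = y" using psi_Ginv[OF n] y by blast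
    moreover have "Ginv n y \<notin> Ccurve n" using C_psi[OF n, of "Ginv n y"] e y by auto
    ultimately show ?thesis using Ginv_Qpts by blast
  qed
  have GB: "Ginv n (psi n x) = x" if x: "x \<in> Qpts n - Ccurve n" for x
  proof -
    obtain i pt where xe: "x = chart n i pt" using Qpts_chart x by blast
    have "psi_rep n i pt \<noteq> (\<lambda>_. 0)" using psi_nz[of x n] x unfolding xe psi_chart by auto
    then show ?thesis unfolding xe psi_chart using G_psi[OF n] by blast
  qed
  have PB: "psi n x \<in> Phat n - {\<lambda>_. 0}" if x: "x \<in> Qpts n - Ccurve n" for x
    using c2 psi_nz[of x n] x by auto
  have c4: "bij_betw (psi n) (Qpts n - Ccurve n) (Phat n - {\<lambda>_. 0})"
    by (rule bij_betw_byWitness[where f'="Ginv n"]) (use GA GB PB in auto)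
  have morph: "morph_into_Q n (Phat n - {\<lambda>_. 0}) (Ginv n)"
    unfolding morph_into_Q_def
  proof
    fix y assume y: "y \<in> Phat n - {\<lambda>_. 0}"
    have v: "(\<lambda>y. y k) \<in> polyfuns (n+5)" if "k < n+5" for k using that by (rule polyfuns.var)
    have v0: "(\<lambda>y. y 0) \<in> polyfuns (n+5)" and v1: "(\<lambda>y. y 1) \<in> polyfuns (n+5)"
      and v2: "(\<lambda>y. y 2) \<in> polyfuns (n+5)" and v3: "(\<lambda>y. y 3) \<in> polyfuns (n+5)"
      and v3': "(\<lambda>y. y (n+3)) \<in> polyfuns (n+5)" and v4: "(\<lambda>y. y (n+4)) \<in> polyfuns (n+5)"
      by (rule v; simp)+
    consider "y 1 \<noteq> 0" | "y 0 \<noteq> 0" | "y (n+4) \<noteq> 0" | "y 2 \<noteq> 0" using phat_nz[OF _ n, of y] y by auto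
    then show "\<exists>i q a b c. q \<in> polyfuns (n + 5) \<and> a \<in> polyfuns (n + 5) \<and> b \<in> polyfuns (n + 5)
     \<and> c \<in> polyfuns (n + 5) \<and> q y \<noteq> 0
     \<and> (\<forall>y'\<in>Phat n - {\<lambda>_. 0}. q y' \<noteq> 0 \<longrightarrow> Ginv n y' = chart n i (a y' / q y', b y' / q y', c y' / q y'))"
    proof cases
      case 1
      have "\<forall>y'\<in>Phat n - {\<lambda>_. 0}. y' 1 \<noteq> 0 \<longrightarrow> Ginv n y' = chart n False (y' 0 / y' 1, (y' (n+4) * y' 1) / y' 1, (y' 1 * y' 1) / y' 1)"
        using Ginv_local[OF n] inv_a1 by auto
      then show ?thesis
        by (rule morph_case[where n=n and y=y and q="\<lambda>y. y 1" and a="\<lambda>y. y 0" and b="\<lambda>y. y (n+4) * y 1" and c="\<lambda>y. y 1 * y 1", OF v1 v0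
              polyfuns.mult[OF v4 v1] polyfuns.mult[OF v1 v1] 1])
    next
      case 2
      have "\<forall>y'\<in>Phat n - {\<lambda>_. 0}. y' 0 \<noteq> 0 \<longrightarrow> Ginv n y' = chart n True (y' 1 / y' 0, (y' 2 * y' 0) / y' 0, (y' 0 * y' 0) / y' 0)"
        using Ginv_local[OF n] inv_a2 by auto
      then show ?thesis
        by (rule morph_case[where n=n and y=y and q="\<lambda>y. y 0" and a="\<lambda>y. y 1" and b="\<lambda>y. y 2 * y 0" and c="\<lambda>y. y 0 * y 0", OF v0 v1
              polyfuns.mult[OF v2 v0] polyfuns.mult[OF v0 v0] 2])
    next
      case 3
      have H3: "\<forall>y'\<in>Phat n - {\<lambda>_. 0}. y' (n+4) \<noteq> 0 \<longrightarrow> Ginv n y' = chart n False ((y' (n+3) - y' 1 ^ n) / y' (n+4), (y' (n+4) * y' (n+4)) / y' (n+4), (y' 1 * y' (n+4)) / y' (n+4))"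
        using Ginv_local[OF n] inv_a3 by auto
      have a3: "(\<lambda>y. y (n+3) - y 1 ^ n) \<in> polyfuns (n+5)" by (intro pf_diff pf_pow v3' v1)
      show ?thesis using H3
        by (rule morph_case[where n=n and y=y and q="\<lambda>y. y (n+4)" and a="\<lambda>y. y (n+3) - y 1 ^ n" and b="\<lambda>y. y (n+4) * y (n+4)" and c="\<lambda>y. y 1 * y (n+4)", OF v4 a3
              polyfuns.mult[OF v4 v4] polyfuns.mult[OF v1 v4] 3])
    next
      case 4
      have "\<forall>y'\<in>Phat n - {\<lambda>_. 0}. y' 2 \<noteq> 0 \<longrightarrow> Ginv n y' = chart n True (y' 3 / y' 2, (y' 2 * y' 2) / y' 2, (y' 0 * y' 2) / y' 2)"
        using Ginv_local[OF n] inv_a4 by auto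
      then show ?thesis
        by (rule morph_case[where n=n and y=y and q="\<lambda>y. y 2" and a="\<lambda>y. y 3" and b="\<lambda>y. y 2 * y 2" and c="\<lambda>y. y 0 * y 2", OF v2 v3
              polyfuns.mult[OF v2 v2] polyfuns.mult[OF v0 v2] 4])
    qed
  qed
  have c5: "\<exists>G. (\<forall>y\<in>Phat n - {\<lambda>_. 0}. G y \<in> Qpts n - Ccurve n \<and> psi n (G y) = y)
          \<and> (\<forall>x\<in>Qpts n - Ccurve n. G (psi n x) = x)
          \<and> morph_into_Q n (Phat n - {\<lambda>_. 0}) G"
    using GA GB morph by blast
  have c6: "\<forall>F. regQ n F \<longleftrightarrow> (\<exists>P\<in>polyfuns (n + 5). \<forall>x\<in>Qpts n. F x = P (psi n x))"
    using regQ_imp[OF n] regQ_if by blast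
  have c7: "\<forall>P\<in>polyfuns (n + 5). (\<forall>x\<in>Qpts n. P (psi n x) = 0) \<longrightarrow> (\<forall>y\<in>Phat n. P y = 0)"
  proof (intro ballI impI)
    fix P y assume h: "\<forall>x\<in>Qpts n. P (psi n x) = 0" and y: "y \<in> Phat n"
    show "P y = 0"
    proof (cases "y = (\<lambda>_. 0)")
      case True
      have "psi n (chart n False (0,0,0)) = y" using True psi_C[OF n] by (simp add: psi_chart)
      then show ?thesis using h chart_Qpts by metis
    next
      case False
      then show ?thesis using h GA[of y] y by auto
    qed
  qed
  show ?thesis using c1 c2 c3 c4 c5 c6 c7 by blast
qed


end
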